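(* Let $R=\{r\in\mathbb{Z}: 1<r\le 5040,\ G(r)\ge e^\gamma\}$. If $r\in R$ and $p\ge 11$ is prime, then $G(pr)<e^\gamma$.
   Context: For a positive integer $n$, $\sigma(n)=\sum_{d\mid n} d$. For integers $n>1$ define $G(n)=\dfrac{\sigma(n)}{n\log\log n}$ (natural logarithms). $\gamma$ is the Euler–Mascheroni constant, $e^\gamma=1.78107\ldots$. *)

theory Defs
  imports "HOL-Analysis.Analysis" "HOL-Computational_Algebra.Primes"
begin

definition sigma :: "nat \<Rightarrow> nat" where
  "sigma n = (\<Sum>d | d dvd n. d)"

definition G :: "nat \<Rightarrow> real" where
  "G n = real (sigma n) / (real n * ln (ln (real n)))"

end

theory Submission
  imports Defs
begin

lemma fin_div: "0 < (n::nat) \<Longrightarrow> finite {d. d dvd n}"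
  by (simp add: finite_divisors_nat)

lemma sigma_mult_le:
  fixes a b :: nat assumes "0 < a" "0 < b"
  shows "sigma (a*b) \<le> sigma a * sigma b"
proof -
  let ?A = "{d. d dvd a}" and ?B = "{d. d dvd b}"
  have fA: "finite ?A" and fB: "finite ?B" using assms fin_div by auto
  have sub: "{d. d dvd a*b} \<subseteq> (\<lambda>(x,y). x*y) ` (?A \<times> ?B)"
  proof
    fix e assume "e \<in> {d. d dvd a*b}"
    then have "e dvd a*b" by simp
    then obtain x y where "e = x*y" "x dvd a" "y dvd b" by (rule dvd_productE)
    then show "e \<in> (\<lambda>(x,y). x*y) ` (?A \<times> ?B)" by force
  qed
  have "sigma (a*b) \<le> sum (\<lambda>d. d) ((\<lambda>(x,y). x*y) ` (?A \<times> ?B))"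
    unfolding sigma_def by (rule sum_mono2) (use sub fA fB in auto)
  also have "\<dots> \<le> sum ((\<lambda>d. d) \<circ> (\<lambda>(x,y). x*y)) (?A \<times> ?B)"
    by (rule sum_image_le) (use fA fB in auto)
  also have "\<dots> = sigma a * sigma b"
    unfolding sigma_def comp_def by (simp add: sum_product sum.cartesian_product)
  finally show ?thesis .
qed

definition geo :: "nat \<Rightarrow> nat \<Rightarrow> nat" where "geo p e = (\<Sum>i\<le>e. p^i)"

lemma geo_0: "geo p 0 = 1" by (simp add: geo_def)
lemma geo_Suc: "geo p (Suc e) = p * geo p e + 1"
  unfolding geo_def sum.atMost_Suc_shift by (simp add: sum_distrib_left)

lemma sigma_prime_pow:
  fixes p :: nat assumes "prime p" shows "sigma (p^e) = geo p e"
proof -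
  have p1: "1 < p" using assms prime_gt_1_nat by blast
  have "{d. d dvd p^e} = (\<lambda>i. p^i) ` {..e}"
    using divides_primepow_nat[OF assms] by auto
  moreover have "inj_on (\<lambda>i. p^i) {..e}"
    using p1 by (auto simp: inj_on_def power_inject_exp)
  ultimately show ?thesis unfolding sigma_def geo_def by (simp add: sum.reindex)
qed

lemma sigma_prime: "prime p \<Longrightarrow> sigma p = p + 1"
  using sigma_prime_pow[of p 1] by (simp add: geo_def)

lemma sigma_one: "sigma 1 = 1" by (simp add: sigma_def)

definition cn :: "nat \<Rightarrow> nat" where
 "cn x = (if 3696 \<le> x then 4190 else if 1701 \<le> x then 4055 else if 640 \<le> x then 3870
   else if 150 \<le> x then 3550 else if 54 \<le> x then 3280 else if 14 \<le> x then 2820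
   else if 7 \<le> x then 2550 else 2190)"

function q :: "nat \<Rightarrow> nat \<Rightarrow> bool" where
 "q x w = (if x = 0 \<or> 5040 < x then True else (3 \<le> x \<longrightarrow> 12 * w * 1000 < 11 * x * cn x) \<and> q (11*x) (12*w))"
  by auto
termination by (relation "Wellfounded.measure (\<lambda>(x,w). 5041 - x)") auto

function lp7 :: "nat \<Rightarrow> nat \<Rightarrow> nat \<Rightarrow> bool" where
 "lp7 x u t = (if x = 0 \<or> 5040 < x then True else q x (u*t) \<and> lp7 (7*x) u (7*t+1))"
  by auto
termination by (relation "Wellfounded.measure (\<lambda>(x,u,t). 5041 - x)") auto
function lp5 :: "nat \<Rightarrow> nat \<Rightarrow> nat \<Rightarrow> bool" where
 "lp5 x u t = (if x = 0 \<or> 5040 < x then True else lp7 x (u*t) 1 \<and> lp5 (5*x) u (5*t+1))"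
  by auto
termination by (relation "Wellfounded.measure (\<lambda>(x,u,t). 5041 - x)") auto
function lp3 :: "nat \<Rightarrow> nat \<Rightarrow> nat \<Rightarrow> bool" where
 "lp3 x u t = (if x = 0 \<or> 5040 < x then True else lp5 x (u*t) 1 \<and> lp3 (3*x) u (3*t+1))"
  by auto
termination by (relation "Wellfounded.measure (\<lambda>(x,u,t). 5041 - x)") auto
function lp2 :: "nat \<Rightarrow> nat \<Rightarrow> nat \<Rightarrow> bool" where
 "lp2 x u t = (if x = 0 \<or> 5040 < x then True else lp3 x (u*t) 1 \<and> lp2 (2*x) u (2*t+1))"
  by auto
termination by (relation "Wellfounded.measure (\<lambda>(x,u,t). 5041 - x)") auto

declare q.simps[simp del] lp7.simps[simp del] lp5.simps[simp del] lp3.simps[simp del] lp2.simps[simp del]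

lemma q_stop: "5040 < x \<Longrightarrow> q x w" by (simp add: q.simps)
lemma q_step: "0 < x \<Longrightarrow> x \<le> 5040 \<Longrightarrow> q x w = ((3 \<le> x \<longrightarrow> 12 * w * 1000 < 11 * x * cn x) \<and> q (11*x) (12*w))"
  by (subst q.simps) simp
lemma lp7_stop: "5040 < x \<Longrightarrow> lp7 x u t" by (simp add: lp7.simps)
lemma lp7_step: "0 < x \<Longrightarrow> x \<le> 5040 \<Longrightarrow> lp7 x u t = (q x (u*t) \<and> lp7 (7*x) u (7*t+1))"
  by (subst lp7.simps) simp
lemma lp5_stop: "5040 < x \<Longrightarrow> lp5 x u t" by (simp add: lp5.simps)
lemma lp5_step: "0 < x \<Longrightarrow> x \<le> 5040 \<Longrightarrow> lp5 x u t = (lp7 x (u*t) 1 \<and> lp5 (5*x) u (5*t+1))"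
  by (subst lp5.simps) simp
lemma lp3_stop: "5040 < x \<Longrightarrow> lp3 x u t" by (simp add: lp3.simps)
lemma lp3_step: "0 < x \<Longrightarrow> x \<le> 5040 \<Longrightarrow> lp3 x u t = (lp5 x (u*t) 1 \<and> lp3 (3*x) u (3*t+1))"
  by (subst lp3.simps) simp
lemma lp2_stop: "5040 < x \<Longrightarrow> lp2 x u t" by (simp add: lp2.simps)
lemma lp2_step: "0 < x \<Longrightarrow> x \<le> 5040 \<Longrightarrow> lp2 x u t = (lp3 x (u*t) 1 \<and> lp2 (2*x) u (2*t+1))"
  by (subst lp2.simps) simp

lemma check: "lp2 1 1 1"
  by (simp add: q_stop q_step lp7_stop lp7_step lp5_stop lp5_step lp3_stop lp3_step lp2_stop lp2_step cn_def)


lemma q_ok: "q x w \<Longrightarrow> 0 < x \<Longrightarrow> x * 11^j \<le> 5040 \<Longrightarrow> 3 \<le> x * 11^j \<Longrightarrow>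
   12 * (w * 12^j) * 1000 < 11 * (x * 11^j) * cn (x * 11^j)"
proof (induction j arbitrary: x w)
  case 0
  then show ?case using q_step[of x w] by simp
next
  case (Suc j)
  have "x \<le> x * 11^Suc j" by simp
  then have "x \<le> 5040" using Suc.prems by linarith
  then have "q (11*x) (12*w)" using q_step[of x w] Suc.prems by simp
  from Suc.IH[OF this] Suc.prems show ?case by (simp add: mult_ac)
qed

lemma lp7_ok: "lp7 x u (geo 7 e) \<Longrightarrow> 0 < x \<Longrightarrow> x * 7^d \<le> 5040 \<Longrightarrow> q (x * 7^d) (u * geo 7 (e+d))"
proof (induction d arbitrary: x e)
  case 0
  then show ?case using lp7_step[of x u "geo 7 e"] by simp
next
  case (Suc d)
  have "x \<le> x * 7^Suc d" by simp
  then have "x \<le> 5040" using Suc.prems by linarith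
  then have "lp7 (7*x) u (geo 7 (Suc e))" using lp7_step[of x u "geo 7 e"] Suc.prems by (simp add: geo_Suc)
  from Suc.IH[OF this] Suc.prems show ?case by (simp add: mult_ac)
qed

lemma lp5_ok: "lp5 x u (geo 5 e) \<Longrightarrow> 0 < x \<Longrightarrow> x * 5^d \<le> 5040 \<Longrightarrow> lp7 (x * 5^d) (u * geo 5 (e+d)) (geo 7 0)"
proof (induction d arbitrary: x e)
  case 0
  then show ?case using lp5_step[of x u "geo 5 e"] by (simp add: geo_0)
next
  case (Suc d)
  have "x \<le> x * 5^Suc d" by simp
  then have "x \<le> 5040" using Suc.prems by linarith
  then have "lp5 (5*x) u (geo 5 (Suc e))" using lp5_step[of x u "geo 5 e"] Suc.prems by (simp add: geo_Suc)
  from Suc.IH[OF this] Suc.prems show ?case by (simp add: mult_ac)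
qed

lemma lp3_ok: "lp3 x u (geo 3 e) \<Longrightarrow> 0 < x \<Longrightarrow> x * 3^d \<le> 5040 \<Longrightarrow> lp5 (x * 3^d) (u * geo 3 (e+d)) (geo 5 0)"
proof (induction d arbitrary: x e)
  case 0
  then show ?case using lp3_step[of x u "geo 3 e"] by (simp add: geo_0)
next
  case (Suc d)
  have "x \<le> x * 3^Suc d" by simp
  then have "x \<le> 5040" using Suc.prems by linarith
  then have "lp3 (3*x) u (geo 3 (Suc e))" using lp3_step[of x u "geo 3 e"] Suc.prems by (simp add: geo_Suc)
  from Suc.IH[OF this] Suc.prems show ?case by (simp add: mult_ac)
qed

lemma lp2_ok: "lp2 x u (geo 2 e) \<Longrightarrow> 0 < x \<Longrightarrow> x * 2^d \<le> 5040 \<Longrightarrow> lp3 (x * 2^d) (u * geo 2 (e+d)) (geo 3 0)"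
proof (induction d arbitrary: x e)
  case 0
  then show ?case using lp2_step[of x u "geo 2 e"] by (simp add: geo_0)
next
  case (Suc d)
  have "x \<le> x * 2^Suc d" by simp
  then have "x \<le> 5040" using Suc.prems by linarith
  then have "lp2 (2*x) u (geo 2 (Suc e))" using lp2_step[of x u "geo 2 e"] Suc.prems by (simp add: geo_Suc)
  from Suc.IH[OF this] Suc.prems show ?case by (simp add: mult_ac)
qed

lemma le_mult_pos: "0 < k \<Longrightarrow> (m::nat) \<le> m * k" by simp

lemma table:
  fixes a b c d j :: nat
  assumes A: "2^a*3^b*5^c*7^d*11^j \<le> (5040::nat)" and B: "3 \<le> (2::nat)^a*3^b*5^c*7^d*11^j"
  shows "12 * (geo 2 a * geo 3 b * geo 5 c * geo 7 d * 12^j) * 1000 < 11 * (2^a*3^b*5^c*7^d*11^j) * cn (2^a*3^b*5^c*7^d*11^j)"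
proof -
  have b1: "(2::nat)^a*3^b*5^c*7^d \<le> 5040" using le_trans[OF le_mult_pos A] by simp
  have b2: "(2::nat)^a*3^b*5^c \<le> 5040" using le_trans[OF le_mult_pos b1] by simp
  have b3: "(2::nat)^a*3^b \<le> 5040" using le_trans[OF le_mult_pos b2] by simp
  have b4: "1 * (2::nat)^a \<le> 5040" using le_trans[OF le_mult_pos b3] by simp
  have "lp2 1 1 (geo 2 0)" using check by (simp add: geo_0)
  from lp2_ok[OF this _ b4] have "lp3 (2^a) (geo 2 a) (geo 3 0)" by simp
  from lp3_ok[OF this _ b3] have "lp5 (2^a*3^b) (geo 2 a * geo 3 b) (geo 5 0)" by simp
  from lp5_ok[OF this _ b2] have "lp7 (2^a*3^b*5^c) (geo 2 a * geo 3 b * geo 5 c) (geo 7 0)" by simp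
  from lp7_ok[OF this _ b1] have "q (2^a*3^b*5^c*7^d) (geo 2 a * geo 3 b * geo 5 c * geo 7 d)" by simp
  from q_ok[OF this _ A B] show ?thesis by (simp add: mult_ac)
qed

lemma exp_lower6: fixes x :: real assumes "0 \<le> x"
  shows "(\<Sum>n<6. x^n / fact n) \<le> exp x"
proof -
  have s: "(\<lambda>n. x^n / fact n) sums exp x" using exp_converges[of x] by (simp add: divide_inverse mult.commute scaleR_conv_of_real)
  have "(\<Sum>n<6. x^n / fact n) \<le> suminf (\<lambda>n. x^n / fact n)"
    by (rule sum_le_suminf) (use s assms in \<open>auto simp: sums_iff\<close>)
  then show ?thesis using s by (simp add: sums_iff)
qed

lemma exp_gamma_lb: "1778/1000 \<le> exp (euler_mascheroni::real)"
proof -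
  have "(1778/1000::real) \<le> (\<Sum>n<6. (19/33)^n / fact n)"
    by (simp add: eval_nat_numeral)
  also have "\<dots> \<le> exp (19/33)" by (rule exp_lower6) simp
  also have "\<dots> \<le> exp euler_mascheroni" using euler_mascheroni_gt_19_over_33 by simp
  finally show ?thesis .
qed

lemma ln2_lb: "6931/10000 \<le> ln (2::real)"
  using ln_approx_bounds[of 2 4] by (simp add: eval_nat_numeral)

lemma ln_lower: fixes q X :: real assumes "1 < q" "2^k * q \<le> X"
  shows "real k * (6931/10000) + (2*((q-1)/(q+1)) + 2/3*((q-1)/(q+1))^3) \<le> ln X"
proof -
  have e: "(\<Sum>k<2. 2*((q-1)/(q+1))^(2*k+1) / of_nat (2*k+1)) = 2*((q-1)/(q+1)) + 2/3*((q-1)/(q+1))^3"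
    by (simp add: eval_nat_numeral)
  have a: "2*((q-1)/(q+1)) + 2/3*((q-1)/(q+1))^3 \<le> ln q"
    using ln_approx_bounds(1)[of q 2] assms(1) unfolding e by simp
  have l1: "ln (2^k * q) = real k * ln 2 + ln q" using assms(1) by (simp add: ln_mult ln_realpow)
  have pos: "0 < 2^k * q" using assms(1) by simp
  have X0: "0 < X" using pos assms(2) by linarith
  have l2: "ln (2^k * q) \<le> ln X" using X0 pos assms(2) by simp
  have l3: "real k * (6931/10000) \<le> real k * ln 2" using ln2_lb by (intro mult_left_mono) auto
  show ?thesis using a l1 l2 l3 by linarith
qed

lemma lnln_lb:
  fixes x Y t qa qb :: real and ka kb a :: nat
  assumes "real a \<le> x" "1 < qa" "2^ka * qa \<le> 11 * real a"
    "Y \<le> real ka * (6931/10000) + (2*((qa-1)/(qa+1)) + 2/3*((qa-1)/(qa+1))^3)"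
    "1 < qb" "2^kb * qb \<le> Y"
    "t \<le> real kb * (6931/10000) + (2*((qb-1)/(qb+1)) + 2/3*((qb-1)/(qb+1))^3)"
  shows "t \<le> ln (ln (11 * x))"
proof -
  have "0 < 2^ka*qa" using assms(2) by simp
  then have pa: "0 < real a" "0 < x" using assms(1,3) by linarith+
  have "Y \<le> ln (11 * real a)" using ln_lower[OF assms(2,3)] assms(4) by linarith
  also have "\<dots> \<le> ln (11 * x)" using assms(1) pa by (subst ln_le_cancel_iff) auto
  finally have Yl: "Y \<le> ln (11 * x)" .
  have "t \<le> ln Y" using ln_lower[OF assms(5,6)] assms(7) by linarith
  also have "\<dots> \<le> ln (ln (11 * x))"
  proof -
    have "0 < 2^kb * qb" using assms(5) by simp
    then have "0 < Y" using assms(6) by linarith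
    then show ?thesis using Yl by (subst ln_le_cancel_iff) auto
  qed
  finally show ?thesis .
qed

lemma blk: fixes x :: real
  assumes "t \<le> ln (ln (11 * x))" "0 \<le> t" "c \<le> 1778 * t"
  shows "c \<le> 1000 * exp euler_mascheroni * ln (ln (11 * x))"
proof -
  have "1778 * t \<le> 1000 * exp euler_mascheroni * t"
    using exp_gamma_lb assms(2) by (intro mult_right_mono) auto
  also have "\<dots> \<le> 1000 * exp euler_mascheroni * ln (ln (11 * x))"
    using assms(1) by (intro mult_left_mono) auto
  finally show ?thesis using assms(3) by linarith
qed

lemma B0: fixes x :: nat assumes "3 \<le> x"
  shows "real (2190::nat) \<le> 1000 * exp euler_mascheroni * ln (ln (11 * real x))"
proof (rule blk)
  show "2190/1778 \<le> ln (ln (11 * real x))"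
    by (rule lnln_lb[where a=3 and ka=5 and qa="33/32" and Y="437/125" and kb=1 and qb="437/250"]) (use assms in \<open>simp_all add: power3_eq_cube\<close>)
qed simp_all

lemma B1: fixes x :: nat assumes "7 \<le> x"
  shows "real (2550::nat) \<le> 1000 * exp euler_mascheroni * ln (ln (11 * real x))"
proof (rule blk)
  show "2550/1778 \<le> ln (ln (11 * real x))"
    by (rule lnln_lb[where a=7 and ka=6 and qa="77/64" and Y="4343/1000" and kb=2 and qb="4343/4000"]) (use assms in \<open>simp_all add: power3_eq_cube\<close>)
qed simp_all

lemma B2: fixes x :: nat assumes "14 \<le> x"
  shows "real (2820::nat) \<le> 1000 * exp euler_mascheroni * ln (ln (11 * real x))"
proof (rule blk)
  show "2820/1778 \<le> ln (ln (11 * real x))"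
    by (rule lnln_lb[where a=14 and ka=7 and qa="77/64" and Y="1259/250" and kb=2 and qb="1259/1000"]) (use assms in \<open>simp_all add: power3_eq_cube\<close>)
qed simp_all

lemma B3: fixes x :: nat assumes "54 \<le> x"
  shows "real (3280::nat) \<le> 1000 * exp euler_mascheroni * ln (ln (11 * real x))"
proof (rule blk)
  show "3280/1778 \<le> ln (ln (11 * real x))"
    by (rule lnln_lb[where a=54 and ka=9 and qa="297/256" and Y="3193/500" and kb=2 and qb="3193/2000"]) (use assms in \<open>simp_all add: power3_eq_cube\<close>)
qed simp_all

lemma B4: fixes x :: nat assumes "150 \<le> x"
  shows "real (3550::nat) \<le> 1000 * exp euler_mascheroni * ln (ln (11 * real x))"
proof (rule blk)
  show "3550/1778 \<le> ln (ln (11 * real x))"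
    by (rule lnln_lb[where a=150 and ka=10 and qa="825/512" and Y="7407/1000" and kb=2 and qb="7407/4000"]) (use assms in \<open>simp_all add: power3_eq_cube\<close>)
qed simp_all

lemma B5: fixes x :: nat assumes "640 \<le> x"
  shows "real (3870::nat) \<le> 1000 * exp euler_mascheroni * ln (ln (11 * real x))"
proof (rule blk)
  show "3870/1778 \<le> ln (ln (11 * real x))"
    by (rule lnln_lb[where a=640 and ka=12 and qa="55/32" and Y="4429/500" and kb=3 and qb="4429/4000"]) (use assms in \<open>simp_all add: power3_eq_cube\<close>)
qed simp_all

lemma B6: fixes x :: nat assumes "1701 \<le> x"
  shows "real (4055::nat) \<le> 1000 * exp euler_mascheroni * ln (ln (11 * real x))"
proof (rule blk)
  show "4055/1778 \<le> ln (ln (11 * real x))"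
    by (rule lnln_lb[where a=1701 and ka=14 and qa="18711/16384" and Y="2459/250" and kb=3 and qb="2459/2000"]) (use assms in \<open>simp_all add: power3_eq_cube\<close>)
qed simp_all

lemma B7: fixes x :: nat assumes "3696 \<le> x"
  shows "real (4190::nat) \<le> 1000 * exp euler_mascheroni * ln (ln (11 * real x))"
proof (rule blk)
  show "4190/1778 \<le> ln (ln (11 * real x))"
    by (rule lnln_lb[where a=3696 and ka=15 and qa="2541/2048" and Y="2653/250" and kb=3 and qb="2653/2000"]) (use assms in \<open>simp_all add: power3_eq_cube\<close>)
qed simp_all

lemma cn_le: fixes x :: nat assumes "3 \<le> x"
  shows "real (cn x) \<le> 1000 * exp euler_mascheroni * ln (ln (11 * real x))"
  using B0[OF assms] B1 B2 B3 B4 B5 B6 B7 unfolding cn_def by (simp split: if_split)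

lemma decomp7:
  fixes r :: nat assumes "0 < r"
  obtains a b c d k where "r = 2^a*3^b*5^c*7^d*k" "\<not> 2 dvd k" "\<not> 3 dvd k" "\<not> 5 dvd k" "\<not> 7 dvd k"
proof -
  define e1 where "e1 = multiplicity 2 r"
  obtain y1 where y1: "r = 2^multiplicity 2 r * y1" "\<not> 2 dvd y1"
    using multiplicity_decompose'[of r 2] assms by auto
  note y1 = y1[folded e1_def]
  have "y1 \<noteq> 0" using y1(2) by (metis dvd_0_right)
  then obtain y2 where y2: "y1 = 3^multiplicity 3 y1 * y2" "\<not> 3 dvd y2"
    using multiplicity_decompose'[of y1 3] by auto
  have "y2 \<noteq> 0" using y2(2) by (metis dvd_0_right)
  then obtain y3 where y3: "y2 = 5^multiplicity 5 y2 * y3" "\<not> 5 dvd y3"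
    using multiplicity_decompose'[of y2 5] by auto
  have "y3 \<noteq> 0" using y3(2) by (metis dvd_0_right)
  then obtain y4 where y4: "y3 = 7^multiplicity 7 y3 * y4" "\<not> 7 dvd y4"
    using multiplicity_decompose'[of y3 7] by auto
  have d4: "y4 dvd y3" "y3 dvd y2" "y2 dvd y1"
    using y4(1) y3(1) y2(1) by (metis dvd_triv_right)+
  have "\<not> 2 dvd y4" using y1(2) d4 dvd_trans by blast
  moreover have "\<not> 3 dvd y4" using y2(2) d4 dvd_trans by blast
  moreover have "\<not> 5 dvd y4" using y3(2) d4 dvd_trans by blast
  moreover have "r = 2^e1*3^multiplicity 3 y1*5^multiplicity 5 y2*7^multiplicity 7 y3*y4"
  proof -
    have "r = 2^e1*y1" by (rule y1(1))
    also have "y1 = 3^multiplicity 3 y1 * y2" by (rule y2(1))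
    also have "y2 = 5^multiplicity 5 y2 * y3" by (rule y3(1))
    also have "y3 = 7^multiplicity 7 y3 * y4" by (rule y4(1))
    finally show ?thesis by (simp add: mult_ac)
  qed
  ultimately show ?thesis using that y4(2) by blast
qed

lemma prime_ge_11:
  fixes p k :: nat
  assumes "prime p" "p dvd k" "\<not> 2 dvd k" "\<not> 3 dvd k" "\<not> 5 dvd k" "\<not> 7 dvd k"
  shows "11 \<le> p"
proof -
  have n: "\<not> q dvd p" if "q \<in> {2,3,5,7::nat}" for q
  proof
    assume "q dvd p"
    moreover have "prime q" using that by auto
    ultimately have "q = p" using assms(1) primes_dvd_imp_eq by blast
    then show False using that assms by auto
  qed
  have "2 \<le> p" using assms(1) prime_ge_2_nat by blast
  moreover have "\<not> 2 dvd p" "\<not> 3 dvd p" "\<not> 5 dvd p" "\<not> 7 dvd p" by (rule n; simp)+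
  ultimately show ?thesis by presburger
qed

lemma Kbound:
  fixes k :: nat
  shows "0 < k \<Longrightarrow> (\<forall>p. prime p \<longrightarrow> p dvd k \<longrightarrow> 11 \<le> p) \<Longrightarrow>
    \<exists>j. 11^j \<le> k \<and> 11^j * sigma k \<le> 12^j * k \<and> (j = 0 \<longrightarrow> k = 1)"
proof (induction k rule: less_induct)
  case (less k)
  show ?case
  proof (cases "k = 1")
    case True
    then show ?thesis using sigma_one by (intro exI[of _ 0]) simp
  next
    case False
    then obtain p where p: "prime p" "p dvd k" using prime_factor_nat by blast
    then obtain k' where k': "k = p * k'" by blast
    have p11: "11 \<le> p" using less.prems p by blast
    have k'0: "0 < k'" using less.prems(1) k' by auto
    have "k' < k" using k' k'0 p11 by simp
    moreover have "\<forall>q. prime q \<longrightarrow> q dvd k' \<longrightarrow> 11 \<le> q"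
      using less.prems(2) k' by auto
    ultimately obtain j where j: "11^j \<le> k'" "11^j * sigma k' \<le> 12^j * k'"
      using less.IH k'0 by blast
    have s: "sigma k \<le> (p+1) * sigma k'"
      using sigma_mult_le[of p k'] sigma_prime[OF p(1)] k' k'0 p11 by simp
    have "11^Suc j \<le> k" using j(1) k' p11 by (simp add: mult_le_mono)
    moreover have "11^Suc j * sigma k \<le> 12^Suc j * k"
    proof -
      have "11^Suc j * sigma k \<le> 11^Suc j * ((p+1) * sigma k')"
        using s by (rule mult_left_mono) simp
      also have "\<dots> = 11 * (p+1) * (11^j * sigma k')" by (simp add: algebra_simps)
      also have "\<dots> \<le> 11 * (p+1) * (12^j * k')" using j(2) by (intro mult_left_mono) auto
      also have "\<dots> \<le> 12 * p * (12^j * k')" using p11 by (intro mult_right_mono) auto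
      also have "\<dots> = 12^Suc j * k" using k' by (simp add: mult_ac)
      finally show ?thesis .
    qed
    ultimately show ?thesis by blast
  qed
qed

theorem lemma3:
  fixes r p :: nat
  assumes "1 < r" and "r \<le> 5040" and "G r \<ge> exp euler_mascheroni"
    and "prime p" and "p \<ge> 11"
  shows "G (p * r) < exp euler_mascheroni"
proof -
  have r3: "3 \<le> r"
  proof (rule ccontr)
    assume "\<not> 3 \<le> r"
    then have r2: "r = 2" using assms(1) by simp
    have s2: "sigma 2 = 3" using sigma_prime[of 2] by simp
    have "0 < ln (2::real)" by simp
    moreover have "ln (2::real) < 1" by (rule ln_2_less_1)
    ultimately have "ln (ln (2::real)) < 0" by simp
    then have "G 2 < 0" unfolding G_def s2 by (simp add: divide_pos_neg)
    then show False using assms(3) r2 by (smt (verit) exp_gt_zero)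
  qed
  have r0: "0 < r" using r3 by simp
  obtain a b c d k where dec: "r = 2^a*3^b*5^c*7^d*k" "\<not> 2 dvd k" "\<not> 3 dvd k" "\<not> 5 dvd k" "\<not> 7 dvd k"
    using decomp7[OF r0] by blast
  define v where "v = (2::nat)^a*3^b*5^c*7^d"
  have rv: "r = v * k" using dec(1) v_def by simp
  have k0: "0 < k" using rv r3 by (cases k) auto
  have v0: "0 < v" unfolding v_def by simp
  have kp: "\<forall>q. prime q \<longrightarrow> q dvd k \<longrightarrow> 11 \<le> q"
    using prime_ge_11 dec(2-5) by blast
  obtain j where j: "11^j \<le> k" "11^j * sigma k \<le> 12^j * k" "j = 0 \<longrightarrow> k = 1"
    using Kbound[OF k0 kp] by blast
  define x where "x = v * 11^j"
  have xr: "x \<le> r" unfolding x_def rv using j(1) by (intro mult_left_mono) auto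
  have x3: "3 \<le> x"
  proof (cases "j = 0")
    case True
    then show ?thesis using j(3) r3 rv unfolding x_def by simp
  next
    case False
    then have "11 \<le> (11::nat)^j" by (cases j) auto
    moreover have "(11::nat)^j \<le> v * 11^j" using v0 by simp
    ultimately have "11 \<le> v * 11^j" by linarith
    then show ?thesis unfolding x_def by simp
  qed
  define U where "U = geo 2 a * geo 3 b * geo 5 c * geo 7 d"
  have tab: "12 * (U * 12^j) * 1000 < 11 * x * cn x"
  proof -
    have "x \<le> 5040" using xr assms(2) by linarith
    from table[of a b c d j, folded v_def, folded x_def U_def, OF this x3] show ?thesis .
  qed
  have sr: "sigma r \<le> U * sigma k"
  proof -
    have pr: "prime (2::nat)" "prime (3::nat)" "prime (5::nat)" "prime (7::nat)" by auto
    have "sigma r \<le> sigma (2^a*3^b*5^c*7^d) * sigma k"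
      using dec(1) sigma_mult_le[of "2^a*3^b*5^c*7^d" k] k0 by simp
    also have "sigma (2^a*3^b*5^c*7^d) \<le> sigma (2^a*3^b*5^c) * sigma (7^d)"
      by (rule sigma_mult_le) auto
    also have "sigma (2^a*3^b*5^c) \<le> sigma (2^a*3^b) * sigma (5^c)"
      by (rule sigma_mult_le) auto
    also have "sigma (2^a*3^b) \<le> sigma (2^a) * sigma (3^b)"
      by (rule sigma_mult_le) auto
    finally show ?thesis unfolding U_def using sigma_prime_pow[OF pr(1)] sigma_prime_pow[OF pr(2)]
       sigma_prime_pow[OF pr(3)] sigma_prime_pow[OF pr(4)] by (simp add: mult_ac)
  qed
  have main_nat: "12 * sigma r * 1000 < 11 * r * cn x"
  proof -
    have "11^j * (12 * sigma r * 1000) \<le> 12 * U * (11^j * sigma k) * 1000"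
      using sr by (simp add: mult_ac)
    also have "\<dots> \<le> 12 * U * (12^j * k) * 1000" using j(2) by simp
    also have "\<dots> = (12 * (U * 12^j) * 1000) * k" by (simp add: mult_ac)
    also have "\<dots> < (11 * x * cn x) * k" using tab k0 by simp
    also have "\<dots> = 11^j * (11 * r * cn x)" unfolding x_def rv by (simp add: mult_ac)
    finally show ?thesis by simp
  qed
  have Lx: "real (cn x) \<le> 1000 * exp euler_mascheroni * ln (ln (11 * real x))" using cn_le[OF x3] .
  have cnpos: "2190 \<le> cn x" unfolding cn_def by simp
  have Eg: "0 < exp (euler_mascheroni::real)" by simp
  have lx_pos: "0 < ln (ln (11 * real x))"
  proof (rule ccontr)
    assume "\<not> 0 < ln (ln (11 * real x))"
    then have "1000 * exp euler_mascheroni * ln (ln (11 * real x)) \<le> 0"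
      using Eg by (intro mult_nonneg_nonpos) auto
    then show False using Lx cnpos by linarith
  qed
  define L where "L = ln (ln (real (p * r)))"
  have x3r: "(3::real) \<le> real x" using x3 by simp
  have l11: "0 < ln (11 * real x)" by (rule ln_gt_zero) (use x3r in linarith)
  have pr11: "11 * real x \<le> real (p * r)"
  proof -
    have "11 * x \<le> p * r" using xr assms(5) by (intro mult_le_mono) auto
    then show ?thesis by (metis of_nat_le_iff of_nat_mult of_nat_numeral)
  qed
  have "ln (11 * real x) \<le> ln (real (p * r))" using pr11 x3r by simp
  then have mono: "ln (ln (11 * real x)) \<le> L" unfolding L_def using l11 by simp
  have Lpos: "0 < L" using mono lx_pos by linarith
  have m1: "12 * real (sigma r) * 1000 < 11 * real r * real (cn x)"
    using main_nat by (metis of_nat_less_iff of_nat_mult of_nat_numeral)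
  have m2: "real (cn x) \<le> 1000 * exp euler_mascheroni * L"
    using Lx mono Eg by (smt (verit) mult_left_mono)
  have rpos: "0 < real r" using r3 by simp
  have m3: "12 * real (sigma r) < 11 * real r * exp euler_mascheroni * L"
  proof -
    have "11 * real r * real (cn x) \<le> 11 * real r * (1000 * exp euler_mascheroni * L)"
      using m2 rpos by (intro mult_left_mono) auto
    then show ?thesis using m1 by (simp add: algebra_simps)
  qed
  have sp: "sigma (p * r) \<le> (p + 1) * sigma r"
    using sigma_mult_le[of p r] sigma_prime[OF assms(4)] assms(5) r3 by simp
  have "11 * sigma (p * r) \<le> 11 * ((p + 1) * sigma r)" using sp by simp
  also have "\<dots> = (11 * (p + 1)) * sigma r" by (simp add: algebra_simps)
  also have "\<dots> \<le> (12 * p) * sigma r" using assms(5) by (intro mult_right_mono) auto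
  finally have sp2: "11 * real (sigma (p * r)) \<le> real p * (12 * real (sigma r))"
    by (metis (mono_tags, opaque_lifting) mult.assoc mult.left_commute of_nat_le_iff of_nat_mult of_nat_numeral)
  have ppos: "0 < real p" using assms(5) by simp
  have "real p * (12 * real (sigma r)) < real p * (11 * real r * exp euler_mascheroni * L)"
    using m3 ppos by simp
  with sp2 have key: "real (sigma (p * r)) < exp euler_mascheroni * (real (p * r) * L)"
    by (simp add: algebra_simps)
  have den: "0 < real (p * r) * L" using ppos rpos Lpos by simp
  show ?thesis unfolding G_def L_def[symmetric] using key den by (simp add: divide_less_eq)
qed

end
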